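(* Let $F \subseteq \mathbb{Z}_2^\omega$ be a set such that Alter has a winning strategy in the game $\mathcal{G}(F)$. Then there exists an equivalence class $X$ of the relation $\sim$ on $\mathbb{Z}_2^\omega$ such that $X\cap F=\emptyset$.
   Context: $\mathbb{Z}_2^\omega$ is the set of infinite binary sequences indexed by $\omega=\{0,1,2,\dots\}$; $\mathbb{Z}_2^+=\bigcup_{n\ge1}\mathbb{Z}_2^n$ is the set of nonempty finite binary words. The Hamming distance is $\mathrm{hd}(x,y)=|\{k: x(k)\ne y(k)\}|\in\omega\cup\{\omega\}$, and $x\sim y$ iff $\mathrm{hd}(x,y)$ is finite. For $F\subseteq \mathbb{Z}_2^\omega$, $\mathcal{G}(F)$ is the following infinite two-player game of perfect information: players Ego and Alter alternately choose words in $\mathbb{Z}_2^+$, Ego moving first; if the moves are $\epsilon_0,\alpha_1,\epsilon_1,\alpha_2,\dots$, the outcome is the concatenation $\epsilon_0\alpha_1\epsilon_1\alpha_2\cdots\in\mathbb{Z}_2^\omega$. Ego wins if the outcome lies in $F$, otherwise Alter wins. A strategy for Alter is a function $a:\bigcup_{n\ge1}(\mathbb{Z}_2^+)^n\to\mathbb{Z}_2^+$ (Alter's $i$-th move being $\alpha_i=a(\epsilon_0,\dots,\epsilon_{i-1})$); it is winning if every play in which Alter follows it has outcome not in $F$. *)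

theory Defs
  imports Main
begin

(* Infinite binary sequences Z_2^omega are modelled as nat => bool,
   nonempty finite binary words Z_2^+ as nonempty bool lists. *)

definition hamming_equiv :: "(nat \<Rightarrow> bool) \<Rightarrow> (nat \<Rightarrow> bool) \<Rightarrow> bool" where
  "hamming_equiv x y \<longleftrightarrow> finite {k. x k \<noteq> y k}"

definition inf_concat :: "(nat \<Rightarrow> bool list) \<Rightarrow> nat \<Rightarrow> bool" where
  "inf_concat w k =
     (let n = (LEAST n. k < (\<Sum>i\<le>n. length (w i)))
      in w n ! (k - (\<Sum>i<n. length (w i))))"

(* A play: Ego's moves e 0, e 1, ...; Alter's i-th move (i >= 1) is
   a [e 0, ..., e (i-1)].  The sequence of all moves in order is
   e 0, a [e 0], e 1, a [e 0, e 1], e 2, ... *)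
definition play_moves :: "(bool list list \<Rightarrow> bool list) \<Rightarrow> (nat \<Rightarrow> bool list) \<Rightarrow> nat \<Rightarrow> bool list" where
  "play_moves a e j = (if even j then e (j div 2) else a (map e [0..<Suc (j div 2)]))"

definition outcome :: "(bool list list \<Rightarrow> bool list) \<Rightarrow> (nat \<Rightarrow> bool list) \<Rightarrow> nat \<Rightarrow> bool" where
  "outcome a e = inf_concat (play_moves a e)"

definition alter_strategy :: "(bool list list \<Rightarrow> bool list) \<Rightarrow> bool" where
  "alter_strategy a \<longleftrightarrow> (\<forall>es. es \<noteq> [] \<and> (\<forall>w\<in>set es. w \<noteq> []) \<longrightarrow> a es \<noteq> [])"

definition alter_winning :: "(nat \<Rightarrow> bool) set \<Rightarrow> (bool list list \<Rightarrow> bool list) \<Rightarrow> bool" where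
  "alter_winning F a \<longleftrightarrow> alter_strategy a \<and>
     (\<forall>e. (\<forall>i. e i \<noteq> []) \<longrightarrow> outcome a e \<notin> F)"

end

theory Submission
  imports Defs "HOL-Library.Nat_Bijection" "HOL-Library.Infinite_Set"
begin

lemma len_concat_upt: "length (concat (map w [0..<m])) = (\<Sum>i<m. length (w i))"
  by (induction m) auto

lemma concat_upt_prefix:
  assumes "m \<le> m'"
  shows "\<exists>r. concat (map w [0..<m']) = concat (map w [0..<m]) @ r"
proof -
  have "[0..<m'] = [0..<m] @ [m..<m']" using assms upt_add_eq_append[of 0 m "m'-m"] by simp
  then show ?thesis by auto
qed

lemma inf_concat_eq:
  assumes ne: "\<forall>i. w i \<noteq> []"
    and pre: "\<forall>m. \<exists>m'\<ge>m. \<forall>k<length (concat (map w [0..<m'])). concat (map w [0..<m']) ! k = z k"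
  shows "inf_concat w = z"
proof
  fix k
  define S where "S n = (\<Sum>i\<le>n. length (w i))" for n
  have Sge: "Suc n \<le> S n" for n
  proof (induction n)
    case 0 then show ?case using ne[rule_format, of 0] by (simp add: S_def Suc_le_eq)
  next
    case (Suc n)
    have "S (Suc n) = S n + length (w (Suc n))" by (simp add: S_def)
    moreover have "length (w (Suc n)) \<ge> 1" using ne by (metis length_0_conv less_one not_le)
    ultimately show ?case using Suc by simp
  qed
  have ex: "k < S k" using Sge[of k] by simp
  define n where "n = (LEAST n. k < S n)"
  have kn: "k < S n" unfolding n_def by (rule LeastI[of _ k], rule ex)
  have kn0: "\<not> k < (\<Sum>i<n. length (w i))"
  proof (cases n)
    case 0 then show ?thesis by simp
  next
    case (Suc n0)
    have "\<not> k < S n0" using Suc n_def not_less_Least by (metis lessI)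
    moreover have "(\<Sum>i<n. length (w i)) = S n0" using Suc by (simp add: S_def lessThan_Suc_atMost)
    ultimately show ?thesis by simp
  qed
  have SL: "S n = (\<Sum>i<Suc n. length (w i))" by (simp add: S_def lessThan_Suc_atMost)
  obtain m' where m': "m' \<ge> Suc n" "\<forall>k<length (concat (map w [0..<m'])). concat (map w [0..<m']) ! k = z k"
    using pre by blast
  obtain r where r: "concat (map w [0..<m']) = concat (map w [0..<Suc n]) @ r"
    using concat_upt_prefix[OF m'(1)] by blast
  have cs: "concat (map w [0..<Suc n]) = concat (map w [0..<n]) @ w n" by simp
  have lk: "k < length (concat (map w [0..<Suc n]))" using kn SL len_concat_upt by metis
  have "z k = concat (map w [0..<m']) ! k" using m'(2) lk r by simp
  also have "\<dots> = concat (map w [0..<Suc n]) ! k" using r lk by (metis nth_append)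
  also have "\<dots> = w n ! (k - (\<Sum>i<n. length (w i)))"
    using cs kn0 len_concat_upt[of w n] by (simp add: nth_append)
  finally show "inf_concat w k = z k"
    unfolding inf_concat_def Let_def n_def[symmetric] S_def[symmetric] by simp
qed

definition po :: "(bool list list \<Rightarrow> bool list) \<Rightarrow> bool list list \<Rightarrow> bool list" where
  "po a h = concat (map (\<lambda>i. h!i @ a (take (Suc i) h)) [0..<length h])"

lemma po_snoc: "po a (h @ [w]) = po a h @ w @ a (h @ [w])"
  unfolding po_def
  apply simp
  apply (rule arg_cong[where f=concat], rule map_cong)
   apply (auto simp: nth_append)
  done

definition sched :: "nat \<Rightarrow> nat set" where
  "sched n = set_decode (fst (prod_decode n))"

fun st :: "(bool list list \<Rightarrow> bool list) \<Rightarrow> nat \<Rightarrow> bool list \<times> (nat set \<Rightarrow> bool list list)" where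
  "st a 0 = ([], \<lambda>D. [])"
| "st a (Suc n) = (let X = fst (st a n); H = snd (st a n); D = sched n in
     if D \<subseteq> {..<length X} then
       (let h = H D; w = map (\<lambda>k. X!k \<noteq> (k\<in>D)) [length (po a h)..<length X] @ [False]
        in (X @ [False] @ a (h @ [w]), H(D := h @ [w])))
     else (X @ [False], H))"

lemma st_step:
  "\<exists>r. fst (st a (Suc n)) = fst (st a n) @ r \<and> length r \<ge> 1"
  "\<exists>r. snd (st a (Suc n)) D = snd (st a n) D @ r"
  by (auto simp: Let_def)

lemma st_inv:
  "length (fst (st a n)) \<ge> n \<and>
   (\<forall>D. length (po a (snd (st a n) D)) \<le> length (fst (st a n)) \<and>
     (\<forall>k<length (po a (snd (st a n) D)). po a (snd (st a n) D) ! k = (fst (st a n) ! k \<noteq> (k\<in>D))) \<and>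
     (\<forall>w\<in>set (snd (st a n) D). w \<noteq> []))"
proof (induction n)
  case 0
  then show ?case by (simp add: po_def)
next
  case (Suc n)
  define X where "X = fst (st a n)"
  define H where "H = snd (st a n)"
  define D where "D = sched n"
  have IH: "length X \<ge> n"
    "\<And>D'. length (po a (H D')) \<le> length X"
    "\<And>D' k. k<length (po a (H D')) \<Longrightarrow> po a (H D') ! k = (X ! k \<noteq> (k\<in>D'))"
    "\<And>D'. \<forall>w\<in>set (H D'). w \<noteq> []"
    using Suc unfolding X_def H_def by auto
  show ?case
  proof (cases "D \<subseteq> {..<length X}")
    case False
    then have e: "st a (Suc n) = (X @ [False], H)"
      by (simp add: X_def H_def D_def Let_def)
    have lt: "\<And>D' k. k < length (po a (H D')) \<Longrightarrow> k < length X"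
      using IH(2) order_less_le_trans by blast
    show ?thesis unfolding e using IH lt by (auto simp: nth_append le_SucI)
  next
    case True
    define h where "h = H D"
    define w where "w = map (\<lambda>k. X!k \<noteq> (k\<in>D)) [length (po a h)..<length X] @ [False]"
    define X' where "X' = X @ [False] @ a (h @ [w])"
    have e: "st a (Suc n) = (X', H(D := h @ [w]))"
      using True by (simp add: X_def H_def D_def Let_def h_def w_def X'_def)
    have lp: "length (po a h) \<le> length X" using IH(2) h_def by simp
    have pw: "po a (h @ [w]) = po a h @ w @ a (h @ [w])" by (rule po_snoc)
    have lpw: "length (po a (h @ [w])) = length X'"
      unfolding pw using lp by (simp add: X'_def w_def)
    have ent: "po a (h @ [w]) ! k = (X' ! k \<noteq> (k\<in>D))" if k: "k < length X'" for k
    proof -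
      consider "k < length (po a h)" | "length (po a h) \<le> k" "k < length X" | "k = length X"
        | "k > length X" by linarith
      then show ?thesis
      proof cases
        case 1 then show ?thesis using IH(3)[of k D] lp unfolding pw by (simp add: X'_def h_def nth_append)
      next
        case 2 then show ?thesis unfolding pw by (simp add: X'_def w_def nth_append less_diff_conv2)
      next
        case 3 then have "k \<notin> D" using True by auto
        then show ?thesis using 3 lp unfolding pw by (simp add: X'_def w_def nth_append)
      next
        case 4 then have "k \<notin> D" using True by auto
        then show ?thesis using 4 lp unfolding pw by (simp add: X'_def w_def nth_append less_diff_conv2)
      qed
    qed
    have "length X' \<ge> Suc n" using IH(1) by (simp add: X'_def)
    moreover have "\<forall>D'. length (po a ((H(D := h @ [w])) D')) \<le> length X'"
    proof
      fix D' show "length (po a ((H(D := h @ [w])) D')) \<le> length X'"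
        using lpw IH(2)[of D'] by (cases "D' = D") (auto simp: X'_def)
    qed
    moreover have "\<forall>D' k. k < length (po a ((H(D := h @ [w])) D')) \<longrightarrow>
        po a ((H(D := h @ [w])) D') ! k = (X' ! k \<noteq> (k\<in>D'))"
    proof (intro allI impI)
      fix D' k assume k: "k < length (po a ((H(D := h @ [w])) D'))"
      show "po a ((H(D := h @ [w])) D') ! k = (X' ! k \<noteq> (k\<in>D'))"
      proof (cases "D' = D")
        case True then show ?thesis using ent k lpw by simp
      next
        case False
        then have "k < length (po a (H D'))" using k by simp
        moreover then have "k < length X" using IH(2)[of D'] by linarith
        ultimately show ?thesis using False IH(3)[of k D'] by (simp add: X'_def nth_append)
      qed
    qed
    moreover have "\<forall>D'. \<forall>v\<in>set ((H(D := h @ [w])) D'). v \<noteq> []"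
      using IH(4) by (auto simp: w_def h_def)
    ultimately show ?thesis unfolding e by simp
  qed
qed

lemma st_progress:
  assumes "sched n = D" "D \<subseteq> {..<length (fst (st a n))}"
  shows "length (snd (st a (Suc n)) D) = Suc (length (snd (st a n) D))"
  using assms by (simp add: Let_def)

lemma X_prefix: "m \<le> n \<Longrightarrow> \<exists>r. fst (st a n) = fst (st a m) @ r"
proof (induction n rule: dec_induct)
  case base then show ?case by simp
next
  case (step n)
  then show ?case using st_step(1)[of a n] by fastforce
qed

lemma H_prefix: "m \<le> n \<Longrightarrow> \<exists>r. snd (st a n) D = snd (st a m) D @ r"
proof (induction n rule: dec_induct)
  case base then show ?case by simp
next
  case (step n)
  then show ?case using st_step(2)[of a n D] by fastforce
qed

lemma concat_play:
  "concat (map (play_moves a E) [0..<2*m]) = po a (map E [0..<m])"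
proof (induction m)
  case 0 then show ?case by (simp add: po_def)
next
  case (Suc m)
  have u: "[0..<2*Suc m] = [0..<2*m] @ [2*m, Suc (2*m)]" by (simp add: upt_rec[of "2*m"])
  have "map E [0..<Suc m] = map E [0..<m] @ [E m]" by simp
  then have "po a (map E [0..<Suc m]) = po a (map E [0..<m]) @ E m @ a (map E [0..<Suc m])"
    by (metis po_snoc)
  then show ?case using Suc unfolding u by (simp add: play_moves_def)
qed

theorem proposition7:
  fixes F :: "(nat \<Rightarrow> bool) set"
  assumes "\<exists>a. alter_winning F a"
  shows "\<exists>x. {y. hamming_equiv x y} \<inter> F = {}"
proof -
  obtain a where aw: "alter_winning F a" using assms by blast
  then have as: "alter_strategy a" by (simp add: alter_winning_def)
  define X where "X n = fst (st a n)" for n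
  define H where "H n = snd (st a n)" for n
  define x where "x k = X (Suc k) ! k" for k
  have xX: "X m ! k = x k" if "k < length (X m)" for m k
  proof -
    obtain r1 where r1: "X (max m (Suc k)) = X m @ r1" using X_prefix[of m "max m (Suc k)" a] X_def by auto
    obtain r2 where r2: "X (max m (Suc k)) = X (Suc k) @ r2" using X_prefix[of "Suc k" "max m (Suc k)" a] X_def by auto
    have "Suc k \<le> length (X (Suc k))" using st_inv[of "Suc k" a] X_def by auto
    then show ?thesis using r1 r2 that unfolding x_def by (metis Suc_le_eq nth_append)
  qed
  have "y \<notin> F" if hy: "hamming_equiv x y" for y
  proof -
    define D where "D = {k. x k \<noteq> y k}"
    have fD: "finite D" using hy by (simp add: hamming_equiv_def D_def)
    obtain B where B: "D \<subseteq> {..<B}" using finite_nat_bounded[OF fD] by blast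
    have grow: "\<exists>n. L \<le> length (H n D)" for L
    proof (induction L)
      case 0 then show ?case by simp
    next
      case (Suc L)
      then obtain n where n: "L \<le> length (H n D)" by blast
      define n' where "n' = prod_encode (set_encode D, n + B)"
      have s: "sched n' = D" using fD by (simp add: sched_def n'_def)
      have nn: "n + B \<le> n'" unfolding n'_def by (rule le_prod_encode_2)
      have "n' \<le> length (X n')" using st_inv[of n' a] X_def by auto
      then have "D \<subseteq> {..<length (fst (st a n'))}" using B nn X_def by auto
      then have "length (H (Suc n') D) = Suc (length (H n' D))"
        using st_progress[OF s] H_def by simp
      moreover obtain r where "H n' D = H n D @ r" using H_prefix[of n n' a D] nn H_def by auto
      ultimately show ?case using n by (metis Suc_le_mono le_add1 length_append order_trans)
    qed
    define E where "E i = H (SOME n. Suc i \<le> length (H n D)) D ! i" for i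
    have HE: "H m D ! i = E i" if "i < length (H m D)" for m i
    proof -
      define n where "n = (SOME n. Suc i \<le> length (H n D))"
      have n: "Suc i \<le> length (H n D)" unfolding n_def using grow by (rule someI_ex)
      obtain r1 where r1: "H (max m n) D = H m D @ r1" using H_prefix[of m "max m n" a D] H_def by auto
      obtain r2 where r2: "H (max m n) D = H n D @ r2" using H_prefix[of n "max m n" a D] H_def by auto
      show ?thesis using r1 r2 that n unfolding E_def n_def[symmetric] by (metis Suc_le_eq nth_append)
    qed
    have Ene: "E i \<noteq> []" for i
    proof -
      obtain n where n: "Suc i \<le> length (H n D)" using grow by blast
      then have "E i \<in> set (H n D)" using HE[of i n] by (metis Suc_le_eq nth_mem)
      then show ?thesis using st_inv[of n a] H_def by auto
    qed
    have mapE: "map E [0..<length (H n D)] = H n D" for n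
      by (rule nth_equalityI) (auto simp: HE)
    have pne: "\<forall>j. play_moves a E j \<noteq> []"
    proof
      fix j
      show "play_moves a E j \<noteq> []"
        using as Ene unfolding play_moves_def alter_strategy_def by auto
    qed
    have pre: "\<forall>m. \<exists>m'\<ge>m. \<forall>k<length (concat (map (play_moves a E) [0..<m'])).
        concat (map (play_moves a E) [0..<m']) ! k = y k"
    proof
      fix m
      obtain n where n: "m \<le> length (H n D)" using grow by blast
      have c: "concat (map (play_moves a E) [0..<2 * length (H n D)]) = po a (H n D)"
        using concat_play[of a E "length (H n D)"] mapE by simp
      have inv: "length (po a (H n D)) \<le> length (X n)"
        "\<And>k. k < length (po a (H n D)) \<Longrightarrow> po a (H n D) ! k = (X n ! k \<noteq> (k\<in>D))"
        using st_inv[of n a] unfolding X_def H_def by auto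
      have "\<forall>k<length (po a (H n D)). po a (H n D) ! k = y k"
      proof (intro allI impI)
        fix k assume k: "k < length (po a (H n D))"
        then have "X n ! k = x k" using inv(1) xX by simp
        then show "po a (H n D) ! k = y k" using inv(2)[OF k] by (auto simp: D_def)
      qed
      then show "\<exists>m'\<ge>m. \<forall>k<length (concat (map (play_moves a E) [0..<m'])).
        concat (map (play_moves a E) [0..<m']) ! k = y k"
        using n c by (intro exI[of _ "2 * length (H n D)"]) auto
    qed
    have "outcome a E = y" unfolding outcome_def by (rule inf_concat_eq[OF pne pre])
    then show ?thesis using aw Ene unfolding alter_winning_def by metis
  qed
  then show ?thesis by blast
qed

end
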